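(* Let $S=\{0,s_1,\dots,s_n,1,\infty\}$ with cyclic order $0<s_1<\dots<s_n<1<\infty<0$, and for $i\in\{1,\dots,n\}$ let $\pi_i:\overline{\mathcal M}_{0,S}\to\overline{\mathcal M}_{0,\{0,s_i,1,\infty\}}=\mathbb{P}^1$ be the contraction morphism forgetting all marked points except $0,s_i,1,\infty$. Then the image under $\pi_i$ of every vertex of $B_n$ lies in $\{0,1\}$.
   Context: $\overline{\mathcal M}_{0,T}$ is the moduli space of $T$-pointed stable genus-$0$ curves; boundary divisors $D(\sigma)$ correspond to unordered stable $2$-partitions of $T$. $\overline{\mathcal M}_{0,\{0,s_i,1,\infty\}}$ is identified with $\mathbb{P}^1$ via the position of $s_i$ when the points $0,1,\infty$ are placed at $0,1,\infty$. A stable $2$-partition of $S$ is strictly ordered if one of its parts consists of cyclically consecutive elements for the given cyclic order. $B_n$ is the union of the boundary divisors $D(\sigma)$ with $\sigma$ strictly ordered (equivalently the Zariski closure of the boundary of the closure of the real simplex $\{0<t_1<\dots<t_n<1\}$ in $\overline{\mathcal M}_{0,S}(\mathbb{C})$). A vertex of $B_n$ is a point lying on $n$ distinct irreducible components of $B_n$. *)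

theory Defs
  imports Complex_Main
begin

datatype pt = Zero | Sm nat | One | Inf

definition Spts :: "nat \<Rightarrow> pt set" where
  "Spts n = {Zero, One, Inf} \<union> Sm ` {1..n}"

fun pos :: "nat \<Rightarrow> pt \<Rightarrow> nat" where
  "pos n Zero = 0"
| "pos n (Sm k) = k"
| "pos n One = n + 1"
| "pos n Inf = n + 2"

definition cyclic_interval :: "nat \<Rightarrow> pt set \<Rightarrow> bool" where
  "cyclic_interval n A \<longleftrightarrow>
     (\<exists>a < n + 3. \<exists>m. A = {x \<in> Spts n. (pos n x + (n + 3) - a) mod (n + 3) < m})"

definition stable_2partition :: "'a set \<Rightarrow> 'a set set \<Rightarrow> bool" where
  "stable_2partition T \<sigma> \<longleftrightarrow>
     (\<exists>A. A \<subseteq> T \<and> \<sigma> = {A, T - A} \<and> 2 \<le> card A \<and> 2 \<le> card (T - A))"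

definition strictly_ordered :: "nat \<Rightarrow> pt set set \<Rightarrow> bool" where
  "strictly_ordered n \<sigma> \<longleftrightarrow>
     stable_2partition (Spts n) \<sigma> \<and> (\<exists>A\<in>\<sigma>. cyclic_interval n A)"

text \<open>A T-pointed stable genus-0 curve over C is given by: a finite tree (V, E) of
  components (each a copy of P^1 = complex option, None = infinity), edges being the
  nodes; a map mark assigning each marked point its component; and for every component
  v, coordinates z v of its special points (Inl p: marked point p on v, Inr w: the node
  joining v to w), which must be pairwise distinct; stability: at least 3 special points
  on each component.\<close>

definition adj :: "'v set set \<Rightarrow> ('v \<times> 'v) set" where
  "adj E = {(a, b). {a, b} \<in> E}"

definition special :: "pt set \<Rightarrow> 'v set set \<Rightarrow> (pt \<Rightarrow> 'v) \<Rightarrow> 'v \<Rightarrow> (pt + 'v) set" where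
  "special T E mark v = Inl ` {p \<in> T. mark p = v} \<union> Inr ` {w. {v, w} \<in> E}"

definition stable_curve ::
  "pt set \<Rightarrow> 'v set \<Rightarrow> 'v set set \<Rightarrow> (pt \<Rightarrow> 'v) \<Rightarrow> ('v \<Rightarrow> pt + 'v \<Rightarrow> complex option) \<Rightarrow> bool" where
  "stable_curve T V E mark z \<longleftrightarrow>
     finite V \<and> V \<noteq> {} \<and>
     (\<forall>e\<in>E. \<exists>a b. a \<in> V \<and> b \<in> V \<and> a \<noteq> b \<and> e = {a, b}) \<and>
     (\<forall>x\<in>V. \<forall>y\<in>V. (x, y) \<in> (adj E)\<^sup>*) \<and>
     card E + 1 = card V \<and>
     mark ` T \<subseteq> V \<and>
     (\<forall>v\<in>V. 3 \<le> card (special T E mark v) \<and> inj_on (z v) (special T E mark v))"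

definition edge_parts :: "pt set \<Rightarrow> 'v set set \<Rightarrow> (pt \<Rightarrow> 'v) \<Rightarrow> 'v set \<Rightarrow> pt set set" where
  "edge_parts T E mark e = (\<lambda>v. {p \<in> T. (v, mark p) \<in> (adj (E - {e}))\<^sup>*}) ` e"

definition in_D :: "pt set \<Rightarrow> 'v set set \<Rightarrow> (pt \<Rightarrow> 'v) \<Rightarrow> pt set set \<Rightarrow> bool" where
  "in_D T E mark \<sigma> \<longleftrightarrow> (\<exists>e\<in>E. edge_parts T E mark e = \<sigma>)"

definition vertex_of_B :: "nat \<Rightarrow> 'v set set \<Rightarrow> (pt \<Rightarrow> 'v) \<Rightarrow> bool" where
  "vertex_of_B n E mark \<longleftrightarrow>
     (\<exists>\<Sigma>. finite \<Sigma> \<and> card \<Sigma> = n \<and>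
        (\<forall>\<sigma>\<in>\<Sigma>. strictly_ordered n \<sigma> \<and> in_D (Spts n) E mark \<sigma>))"

definition hc :: "complex option \<Rightarrow> complex \<times> complex" where
  "hc x = (case x of None \<Rightarrow> (1, 0) | Some a \<Rightarrow> (a, 1))"

definition det2 :: "complex \<times> complex \<Rightarrow> complex \<times> complex \<Rightarrow> complex" where
  "det2 x y = fst x * snd y - snd x * fst y"

text \<open>Image of b under the Moebius map sending a, c, d to 0, 1, infinity.\<close>
definition cross_ratio ::
  "complex option \<Rightarrow> complex option \<Rightarrow> complex option \<Rightarrow> complex option \<Rightarrow> complex option" where
  "cross_ratio a b c d =
     (let u = det2 (hc b) (hc a) * det2 (hc c) (hc d);
          w = det2 (hc b) (hc d) * det2 (hc c) (hc a)
      in if w = 0 then None else Some (u / w))"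

text \<open>Direction (special point of component v) through which the marked point p is reached.\<close>
definition dir :: "'v set set \<Rightarrow> (pt \<Rightarrow> 'v) \<Rightarrow> 'v \<Rightarrow> pt \<Rightarrow> pt + 'v" where
  "dir E mark v p =
     (if mark p = v then Inl p
      else Inr (THE w. {v, w} \<in> E \<and> (w, mark p) \<in> (adj (E - {{v, w}}))\<^sup>*))"

text \<open>pi_i on points: forget all marked points but 0, s_i, 1, infinity and stabilise;
  the result is read off as the position of s_i (None = infinity).  If a node separates
  the four points, the image is the corresponding boundary point (s_i colliding with 0,
  1 or infinity); otherwise it is the cross-ratio on the unique component where the four
  points go in pairwise distinct directions.\<close>
definition forget_value ::
  "nat \<Rightarrow> 'v set \<Rightarrow> 'v set set \<Rightarrow> (pt \<Rightarrow> 'v) \<Rightarrow> ('v \<Rightarrow> pt + 'v \<Rightarrow> complex option) \<Rightarrow> nat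
     \<Rightarrow> complex option" where
  "forget_value n V E mark z i =
     (let F = {Zero, Sm i, One, Inf};
          sep = (\<lambda>P. \<exists>e\<in>E. \<exists>X\<in>edge_parts (Spts n) E mark e. X \<inter> F = P)
      in if sep {Zero, Sm i} then Some 0
         else if sep {Sm i, One} then Some 1
         else if sep {Sm i, Inf} then None
         else (let v = (SOME v. v \<in> V \<and> inj_on (dir E mark v) F)
               in cross_ratio (z v (dir E mark v Zero)) (z v (dir E mark v (Sm i)))
                              (z v (dir E mark v One)) (z v (dir E mark v Inf))))"

end

theory Submission
  imports Defs
begin

lemma adj_sym_rt: "(a,b) \<in> (adj E)\<^sup>* \<Longrightarrow> (b,a) \<in> (adj E)\<^sup>*"
proof -
  assume h: "(a,b) \<in> (adj E)\<^sup>*"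
  have "sym (adj E)" by (auto simp: sym_def adj_def insert_commute)
  hence "sym ((adj E)\<^sup>*)" by (rule sym_rtrancl)
  thus ?thesis using h by (meson symD)
qed

lemma rt_mono: "E1 \<subseteq> E2 \<Longrightarrow> (a,b) \<in> (adj E1)\<^sup>* \<Longrightarrow> (a,b) \<in> (adj E2)\<^sup>*"
proof -
  assume "E1 \<subseteq> E2" "(a,b) \<in> (adj E1)\<^sup>*"
  moreover have "adj E1 \<subseteq> adj E2" using \<open>E1 \<subseteq> E2\<close> by (auto simp: adj_def)
  ultimately show ?thesis using rtrancl_mono by blast
qed

lemma lem2:
  assumes "(w,x) \<in> (adj (insert {a,b} E'))\<^sup>*"
  shows "(w,x) \<in> (adj E')\<^sup>* \<or> (w,a) \<in> (adj E')\<^sup>* \<or> (w,b) \<in> (adj E')\<^sup>*"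
  using assms
proof (induction rule: rtrancl_induct)
  case base then show ?case by simp
next
  case (step y x)
  from step.hyps(2) have "{y,x} = {a,b} \<or> {y,x} \<in> E'" by (simp add: adj_def)
  then show ?case
  proof
    assume h: "{y,x} = {a,b}"
    hence "y = a \<or> y = b" by (auto simp: doubleton_eq_iff)
    thus ?thesis using step.IH by auto
  next
    assume "{y,x} \<in> E'"
    hence "(y,x) \<in> adj E'" by (simp add: adj_def)
    thus ?thesis using step.IH by (blast intro: rtrancl_into_rtrancl)
  qed
qed

lemma decomp:
  assumes "(v,x) \<in> (adj (E - {{u,v}}))\<^sup>*"
  shows "x = v \<or> (\<exists>w. {v,w} \<in> E \<and> w \<noteq> u \<and> (w,x) \<in> (adj (E - {{v,w}}))\<^sup>*)"
  using assms
proof (induction rule: rtrancl_induct)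
  case base thus ?case by simp
next
  case (step y x)
  from step.hyps(2) have yx: "{y,x} \<in> E" "{y,x} \<noteq> {u,v}" by (auto simp: adj_def)
  from step.IH show ?case
  proof
    assume "y = v"
    show ?thesis
    proof (cases "x = v")
      case True thus ?thesis by simp
    next
      case False
      have "x \<noteq> u" using yx \<open>y = v\<close> by (auto simp: insert_commute)
      thus ?thesis using yx \<open>y=v\<close> by blast
    qed
  next
    assume "\<exists>w. {v,w} \<in> E \<and> w \<noteq> u \<and> (w,y) \<in> (adj (E - {{v,w}}))\<^sup>*"
    then obtain w where w: "{v,w} \<in> E" "w \<noteq> u" "(w,y) \<in> (adj (E - {{v,w}}))\<^sup>*" by blast
    show ?thesis
    proof (cases "{y,x} = {v,w}")
      case True
      then have "x = v \<or> x = w" by (auto simp: doubleton_eq_iff)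
      thus ?thesis using w by auto
    next
      case False
      hence "(y,x) \<in> adj (E - {{v,w}})" using yx by (simp add: adj_def)
      hence "(w,x) \<in> (adj (E - {{v,w}}))\<^sup>*" using w(3) by (meson rtrancl.rtrancl_into_rtrancl)
      thus ?thesis using w by blast
    qed
  qed
qed

lemma side_incl:
  assumes "{u,v} \<in> E" "{v,w} \<in> E" "{v,w} \<noteq> {u,v}"
    and nb: "(w,v) \<notin> (adj (E - {{v,w}}))\<^sup>*"
    and wx: "(w,x) \<in> (adj (E - {{v,w}}))\<^sup>*"
  shows "(v,x) \<in> (adj (E - {{u,v}}))\<^sup>*"
proof -
  let ?E' = "E - {{v,w}} - {{u,v}}"
  have eq: "E - {{v,w}} = insert {u,v} ?E'" using assms(1,3) by auto
  from lem2[of w x u v ?E'] wx eq have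
    d: "(w,x) \<in> (adj ?E')\<^sup>* \<or> (w,u) \<in> (adj ?E')\<^sup>* \<or> (w,v) \<in> (adj ?E')\<^sup>*" by simp
  have sub1: "?E' \<subseteq> E - {{u,v}}" and sub2: "?E' \<subseteq> E - {{v,w}}" by auto
  have uv: "(u,v) \<in> adj (E - {{v,w}})" using assms(1,3) by (auto simp: adj_def)
  have vw: "(v,w) \<in> adj (E - {{u,v}})" using assms(2,3) by (auto simp: adj_def)
  from d show ?thesis
  proof (elim disjE)
    assume "(w,x) \<in> (adj ?E')\<^sup>*"
    hence "(w,x) \<in> (adj (E - {{u,v}}))\<^sup>*" using rt_mono[OF sub1] by blast
    thus ?thesis using vw by (meson converse_rtrancl_into_rtrancl)
  next
    assume "(w,u) \<in> (adj ?E')\<^sup>*"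
    hence "(w,u) \<in> (adj (E - {{v,w}}))\<^sup>*" using rt_mono[OF sub2] by blast
    hence "(w,v) \<in> (adj (E - {{v,w}}))\<^sup>*" using uv by (meson rtrancl.rtrancl_into_rtrancl)
    thus ?thesis using nb by simp
  next
    assume "(w,v) \<in> (adj ?E')\<^sup>*"
    hence "(w,v) \<in> (adj (E - {{v,w}}))\<^sup>*" using rt_mono[OF sub2] by blast
    thus ?thesis using nb by simp
  qed
qed

lemma side_V:
  assumes "\<forall>e\<in>E. e \<subseteq> V" "w \<in> V" "(w,x) \<in> (adj E')\<^sup>*" "E' \<subseteq> E"
  shows "x \<in> V"
  using assms(3)
proof (induction rule: rtrancl_induct)
  case base thus ?case using assms(2) by simp
next
  case (step y z)
  hence "{y,z} \<in> E" using assms(4) by (auto simp: adj_def)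
  thus ?case using assms(1) by auto
qed

lemma T1:
  assumes "edge_parts T E mark {v,w} = {A, T - A}" "A \<subseteq> T" "A \<noteq> {}"
  shows "(w,v) \<notin> (adj (E - {{v,w}}))\<^sup>*"
proof
  let ?R = "(adj (E - {{v,w}}))\<^sup>*"
  let ?X = "\<lambda>x. {p \<in> T. (x, mark p) \<in> ?R}"
  assume h: "(w,v) \<in> ?R"
  have hv: "(v,w) \<in> ?R" using adj_sym_rt[OF h] .
  have e1: "(w,y) \<in> ?R" if "(v,y) \<in> ?R" for y using rtrancl_trans[OF h that] .
  have e2: "(v,y) \<in> ?R" if "(w,y) \<in> ?R" for y using rtrancl_trans[OF hv that] .
  have xx: "?X v = ?X w"
  proof (rule set_eqI)
    fix p show "p \<in> ?X v \<longleftrightarrow> p \<in> ?X w" using e1 e2 by auto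
  qed
  have "edge_parts T E mark {v,w} = ?X ` {v,w}" unfolding edge_parts_def ..
  also have "\<dots> = {?X v, ?X w}" by simp
  also have "\<dots> = {?X v}" using xx by simp
  finally have ep1: "edge_parts T E mark {v,w} = {?X v}" .
  have eq: "{A, T - A} = {?X v}" using trans[OF sym[OF assms(1)] ep1] .
  have "A \<in> {A, T - A}" "T - A \<in> {A, T - A}" by simp_all
  hence "A = ?X v" "T - A = ?X v" unfolding eq by simp_all
  hence "A = T - A" by simp
  thus False using assms(3) by blast
qed


lemma handshake:
  assumes fin: "finite V" and E: "\<forall>e\<in>E. \<exists>a b. a\<in>V \<and> b\<in>V \<and> a\<noteq>b \<and> e={a,b}"
  shows "(\<Sum>v\<in>V. card {w. {v,w}\<in>E}) = 2 * card E"
proof -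
  have "E \<subseteq> Pow V"
  proof
    fix e assume "e \<in> E"
    then obtain a b where "a\<in>V" "b\<in>V" "e={a,b}" using E by blast
    thus "e \<in> Pow V" by simp
  qed
  moreover have "finite (Pow V)" using fin by simp
  ultimately have finE: "finite E" by (rule finite_subset)
  have 1: "card {w. {v,w}\<in>E} = card {e\<in>E. v\<in>e}" for v
  proof (rule bij_betw_same_card[of "\<lambda>w. {v,w}"])
    show "bij_betw (\<lambda>w. {v,w}) {w. {v,w}\<in>E} {e\<in>E. v\<in>e}"
      unfolding bij_betw_def
    proof
      show "inj_on (\<lambda>w. {v,w}) {w. {v,w}\<in>E}"
      proof (rule inj_onI)
        fix x y assume "{v,x} = {v,y}"
        thus "x = y" by (auto simp: doubleton_eq_iff)
      qed
      show "(\<lambda>w. {v,w}) ` {w. {v,w}\<in>E} = {e\<in>E. v\<in>e}"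
      proof
        show "(\<lambda>w. {v,w}) ` {w. {v,w}\<in>E} \<subseteq> {e\<in>E. v\<in>e}" by blast
        show "{e\<in>E. v\<in>e} \<subseteq> (\<lambda>w. {v,w}) ` {w. {v,w}\<in>E}"
        proof
          fix e assume e: "e \<in> {e\<in>E. v\<in>e}"
          then obtain a b where ab: "e = {a,b}" using E by blast
          have "v = a \<or> v = b" using e ab by blast
          hence "\<exists>c. e = {v,c}"
          proof
            assume "v = a" thus ?thesis using ab by blast
          next
            assume "v = b" thus ?thesis using ab insert_commute by metis
          qed
          then obtain c where c: "e = {v,c}" by blast
          hence "c \<in> {w. {v,w}\<in>E}" using e by simp
          thus "e \<in> (\<lambda>w. {v,w}) ` {w. {v,w}\<in>E}" using c by (rule rev_image_eqI)
        qed
      qed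
    qed
  qed
  have 2: "card {e\<in>E. v\<in>e} = (\<Sum>e\<in>E. if v\<in>e then 1 else 0)" for v
  proof -
    have "card {e\<in>E. v\<in>e} = (\<Sum>e\<in>{e\<in>E. v\<in>e}. (1::nat))" by simp
    also have "\<dots> = (\<Sum>e\<in>E. if v\<in>e then 1 else 0)" by (rule sum.inter_filter[OF finE])
    finally show ?thesis .
  qed
  have 3: "(\<Sum>v\<in>V. if v\<in>e then 1 else (0::nat)) = 2" if eE: "e\<in>E" for e
  proof -
    obtain a b where ab: "a\<in>V" "b\<in>V" "a\<noteq>b" "e={a,b}" using E eE by blast
    then have "{v\<in>V. v\<in>e} = {a,b}" by auto
    moreover have "(\<Sum>v\<in>V. if v\<in>e then 1 else (0::nat)) = card {v\<in>V. v\<in>e}"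
    proof -
      have "card {v\<in>V. v\<in>e} = (\<Sum>v\<in>{v\<in>V. v\<in>e}. (1::nat))" by simp
      also have "\<dots> = (\<Sum>v\<in>V. if v\<in>e then 1 else 0)" by (rule sum.inter_filter[OF fin])
      finally show ?thesis by simp
    qed
    moreover have "card {a,b} = 2" using ab(3) by simp
    ultimately show ?thesis by metis
  qed
  have "(\<Sum>v\<in>V. card {w. {v,w}\<in>E}) = (\<Sum>v\<in>V. \<Sum>e\<in>E. if v\<in>e then 1 else 0)"
    by (rule sum.cong[OF refl]) (simp only: 1 2)
  also have "\<dots> = (\<Sum>e\<in>E. \<Sum>v\<in>V. if v\<in>e then 1 else 0)" by (rule sum.swap)
  also have "\<dots> = (\<Sum>e\<in>E. 2)" by (rule sum.cong[OF refl 3])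
  also have "\<dots> = 2 * card E" by simp
  finally show ?thesis .
qed


lemma sum_marks:
  assumes "finite T" "finite V" "mark ` T \<subseteq> V"
  shows "(\<Sum>v\<in>V. card {p\<in>T. mark p = v}) = card T"
proof -
  have "T = (\<Union>v\<in>V. {p\<in>T. mark p = v})" using assms by auto
  moreover have "card (\<Union>v\<in>V. {p\<in>T. mark p = v}) = (\<Sum>v\<in>V. card {p\<in>T. mark p = v})"
    by (rule card_UN_disjoint) (use assms in auto)
  ultimately show ?thesis by simp
qed

lemma card_Spts: "finite (Spts n) \<and> card (Spts n) = n + 3"
proof -
  have "Spts n = {Zero, One, Inf} \<union> Sm ` {1..n}" by (simp add: Spts_def)
  moreover have "card (Sm ` {1..n}) = n" by (simp add: card_image inj_on_def)
  moreover have "{Zero, One, Inf} \<inter> Sm ` {1..n} = {}" by auto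
  ultimately show ?thesis by (simp add: card_Un_disjoint)
qed

lemma modrot: "(x::nat) < N \<Longrightarrow> a < N \<Longrightarrow> (x + N - a) mod N = (if a \<le> x then x - a else x + N - a)"
proof (cases "a \<le> x")
  case True
  assume "x < N" "a < N"
  then have "x + N - a = (x - a) + N" using True by linarith
  moreover have "(x - a + N) mod N = x - a" using \<open>x < N\<close> by simp
  ultimately show ?thesis using True by simp
next
  case False
  assume "x < N" "a < N"
  then show ?thesis using False by simp
qed

lemma get_part:
  assumes "stable_2partition T \<sigma>"
  obtains A where "A \<subseteq> T" "\<sigma> = {A, T - A}" "2 \<le> card A" "2 \<le> card (T - A)"
  using assms unfolding stable_2partition_def by blast

lemma comb:
  assumes "i \<in> {1..n}" "A \<subseteq> Spts n" "\<sigma> = {A, Spts n - A}" "B \<in> \<sigma>" "cyclic_interval n B"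
    "X \<in> \<sigma>" "card (X \<inter> {Zero, Sm i, One, Inf}) = 2"
  shows "\<exists>Y\<in>\<sigma>. Y \<inter> {Zero, Sm i, One, Inf} = {Zero, Sm i} \<or> Y \<inter> {Zero, Sm i, One, Inf} = {Sm i, One}"
proof -
  define T where "T = Spts n"
  define F where "F = {Zero, Sm i, One, Inf}"
  have FT: "F \<subseteq> T" using assms(1) by (auto simp: F_def T_def Spts_def)
  have cardF: "card F = 4" by (simp add: F_def)
  have BT: "B \<subseteq> T" and cB: "T - B \<in> \<sigma>" using assms(2,3,4) by (auto simp: T_def)
  have cBF: "card (B \<inter> F) = 2"
  proof (cases "X = B")
    case True thus ?thesis using assms(7) by (simp add: F_def)
  next
    case False
    hence "X = T - B" using assms(2,3,4,6) by (auto simp: T_def)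
    hence "X \<inter> F = F - (B \<inter> F)" using FT by auto
    hence "card (X \<inter> F) = card F - card (B \<inter> F)" by (simp add: card_Diff_subset F_def)
    thus ?thesis using assms(7) cardF by (simp add: F_def)
  qed
  obtain a m where am: "a < n + 3" "B = {x \<in> T. (pos n x + (n + 3) - a) mod (n + 3) < m}"
    using assms(5) by (auto simp: cyclic_interval_def T_def)
  have inT: "Zero \<in> T" "One \<in> T" "Inf \<in> T" "Sm i \<in> T" using FT by (auto simp: F_def)
  have i: "1 \<le> i" "i \<le> n" using assms(1) by auto
  have d0: "Zero \<in> B \<longleftrightarrow> (if a \<le> 0 then 0 - a else 0 + (n+3) - a) < m"
    using am inT modrot[of 0 "n+3" a] by simp
  have di: "Sm i \<in> B \<longleftrightarrow> (if a \<le> i then i - a else i + (n+3) - a) < m"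
    using am inT modrot[of i "n+3" a] i by simp
  have d1: "One \<in> B \<longleftrightarrow> (if a \<le> n+1 then n+1 - a else n+1 + (n+3) - a) < m"
    using am inT modrot[of "n+1" "n+3" a] by simp
  have dI: "Inf \<in> B \<longleftrightarrow> (if a \<le> n+2 then n+2 - a else n+2 + (n+3) - a) < m"
    using am inT modrot[of "n+2" "n+3" a] by simp
  have n01: "\<not> (Zero \<in> B \<and> One \<in> B \<and> Sm i \<notin> B \<and> Inf \<notin> B)"
    unfolding d0 di d1 dI using i am(1) by (auto split: if_splits)
  have niI: "\<not> (Sm i \<in> B \<and> Inf \<in> B \<and> Zero \<notin> B \<and> One \<notin> B)"
    unfolding d0 di d1 dI using i am(1) by (auto split: if_splits)
  have memF: "p \<in> B \<inter> F \<longleftrightarrow> (p = Zero \<and> Zero \<in> B) \<or> (p = Sm i \<and> Sm i \<in> B) \<or> (p = One \<and> One \<in> B) \<or> (p = Inf \<and> Inf \<in> B)" for p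
    unfolding F_def by blast
  have memC: "p \<in> (T - B) \<inter> F \<longleftrightarrow> (p = Zero \<and> Zero \<notin> B) \<or> (p = Sm i \<and> Sm i \<notin> B) \<or> (p = One \<and> One \<notin> B) \<or> (p = Inf \<and> Inf \<notin> B)" for p
    using inT unfolding F_def by blast
  have Bexp: "B \<inter> F = (if Zero \<in> B then {Zero} else {}) \<union> (if Sm i \<in> B then {Sm i} else {}) \<union> (if One \<in> B then {One} else {}) \<union> (if Inf \<in> B then {Inf} else {})"
    unfolding set_eq_iff memF by auto
  have ex: "(Zero \<in> B \<and> Sm i \<in> B \<and> One \<notin> B \<and> Inf \<notin> B) \<or> (Sm i \<in> B \<and> One \<in> B \<and> Zero \<notin> B \<and> Inf \<notin> B) \<or> (One \<in> B \<and> Inf \<in> B \<and> Zero \<notin> B \<and> Sm i \<notin> B) \<or> (Zero \<in> B \<and> Inf \<in> B \<and> Sm i \<notin> B \<and> One \<notin> B)"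
    using cBF n01 niI unfolding Bexp
    by (cases "Zero \<in> B"; cases "One \<in> B"; cases "Sm i \<in> B"; cases "Inf \<in> B") simp_all
  from ex show ?thesis
  proof (elim disjE)
    assume c: "Zero \<in> B \<and> Sm i \<in> B \<and> One \<notin> B \<and> Inf \<notin> B"
    have "B \<inter> F = {Zero, Sm i}" unfolding set_eq_iff memF using c by auto
    thus ?thesis using assms(4) unfolding F_def by blast
  next
    assume c: "Sm i \<in> B \<and> One \<in> B \<and> Zero \<notin> B \<and> Inf \<notin> B"
    have "B \<inter> F = {Sm i, One}" unfolding set_eq_iff memF using c by auto
    thus ?thesis using assms(4) unfolding F_def by blast
  next
    assume c: "One \<in> B \<and> Inf \<in> B \<and> Zero \<notin> B \<and> Sm i \<notin> B"
    have "(T - B) \<inter> F = {Zero, Sm i}" unfolding set_eq_iff memC using c by auto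
    thus ?thesis using cB unfolding F_def by blast
  next
    assume c: "Zero \<in> B \<and> Inf \<in> B \<and> Sm i \<notin> B \<and> One \<notin> B"
    have "(T - B) \<inter> F = {Sm i, One}" unfolding set_eq_iff memC using c by auto
    thus ?thesis using cB unfolding F_def by blast
  qed
qed

theorem proposition2p7:
  fixes n i :: nat and V :: "'v set" and E :: "'v set set"
    and mark :: "pt \<Rightarrow> 'v" and z :: "'v \<Rightarrow> pt + 'v \<Rightarrow> complex option"
  assumes "i \<in> {1..n}"
    and "stable_curve (Spts n) V E mark z"
    and "vertex_of_B n E mark"
  shows "forget_value n V E mark z i \<in> {Some 0, Some 1}"
proof -
  define T where "T = Spts n"
  define F where "F = {Zero, Sm i, One, Inf}"
  define R where "R f = (adj (E - {f}))\<^sup>*" for f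
  define Xs where "Xs x f = {p \<in> T. (x, mark p) \<in> R f}" for x f
  note sc = assms(2)[unfolded stable_curve_def, folded T_def]
  have fin: "finite V" using sc by (elim conjE)
  have Eedge: "\<forall>e\<in>E. \<exists>a b. a\<in>V \<and> b\<in>V \<and> a\<noteq>b \<and> e={a,b}" using sc by (elim conjE)
  have cardVE: "card E + 1 = card V" using sc by (elim conjE)
  have markV: "mark ` T \<subseteq> V" using sc by (elim conjE)
  have stab: "\<forall>v\<in>V. 3 \<le> card (special T E mark v)"
  proof
    fix v assume "v \<in> V"
    thus "3 \<le> card (special T E mark v)" using sc by (elim conjE) blast
  qed
  have EsubV: "\<forall>e\<in>E. e \<subseteq> V"
  proof
    fix e assume "e \<in> E"
    then obtain a b where "a\<in>V" "b\<in>V" "e={a,b}" using Eedge by blast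
    thus "e \<subseteq> V" by simp
  qed
  have "E \<subseteq> Pow V"
  proof
    fix e assume "e \<in> E"
    thus "e \<in> Pow V" using EsubV by simp
  qed
  moreover have "finite (Pow V)" using fin by simp
  ultimately have finE: "finite E" by (rule finite_subset)
  have finT: "finite T" and cardT: "card T = n + 3" using card_Spts[of n] by (auto simp: T_def)
  have "Sm i \<in> Sm ` {1..n}" using assms(1) by (rule imageI)
  hence FT: "F \<subseteq> T" unfolding F_def T_def Spts_def by blast
  have cardF: "card F = 4" by (simp add: F_def)
  from assms(3) obtain \<Sigma> where \<Sigma>: "finite \<Sigma>" "card \<Sigma> = n"
      "\<forall>\<sigma>\<in>\<Sigma>. strictly_ordered n \<sigma> \<and> in_D T E mark \<sigma>"
    unfolding vertex_of_B_def T_def by blast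
  have "\<forall>\<sigma>\<in>\<Sigma>. \<exists>e. e \<in> E \<and> edge_parts T E mark e = \<sigma>" using \<Sigma>(3) by (auto simp: in_D_def)
  hence "\<exists>g. \<forall>\<sigma>\<in>\<Sigma>. g \<sigma> \<in> E \<and> edge_parts T E mark (g \<sigma>) = \<sigma>" by (rule bchoice)
  then obtain g where g: "\<forall>\<sigma>\<in>\<Sigma>. g \<sigma> \<in> E \<and> edge_parts T E mark (g \<sigma>) = \<sigma>" ..
  have inj: "inj_on g \<Sigma>"
  proof (rule inj_onI)
    fix x y assume "x \<in> \<Sigma>" "y \<in> \<Sigma>" "g x = g y"
    hence "edge_parts T E mark (g x) = edge_parts T E mark (g y)" by simp
    thus "x = y" using g \<open>x \<in> \<Sigma>\<close> \<open>y \<in> \<Sigma>\<close> by simp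
  qed
  have cg: "card (g ` \<Sigma>) = n" using card_image[OF inj] \<Sigma>(2) by simp
  have gE: "g ` \<Sigma> \<subseteq> E" using g by auto
  hence nle: "n \<le> card E" using card_mono[OF finE gE] cg by simp
  have finNb: "finite {w. {v,w}\<in>E}" for v
  proof -
    have "{w. {v,w}\<in>E} \<subseteq> V" using EsubV by auto
    thus ?thesis using fin finite_subset by blast
  qed
  have finM: "finite {p\<in>T. mark p = v}" for v using finT by simp
  have spc: "card (special T E mark v) = card {p\<in>T. mark p = v} + card {w. {v,w}\<in>E}" for v
  proof -
    have "special T E mark v = Inl ` {p\<in>T. mark p = v} \<union> Inr ` {w. {v,w}\<in>E}"
      by (simp add: special_def)
    moreover have "Inl ` {p\<in>T. mark p = v} \<inter> Inr ` {w. {v,w}\<in>E} = {}" by auto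
    ultimately show ?thesis using finNb finM
      by (simp add: card_Un_disjoint card_image)
  qed
  have sumsp: "(\<Sum>v\<in>V. card (special T E mark v)) = card T + 2 * card E"
    using spc sum_marks[OF finT fin markV] handshake[OF fin Eedge] by (simp add: sum.distrib)
  have le3: "(\<Sum>v\<in>V. 3) \<le> (\<Sum>v\<in>V. card (special T E mark v))"
    using stab by (intro sum_mono) auto
  hence "3 * card V \<le> card T + 2 * card E" using sumsp by simp
  hence cE: "card E = n" using cardVE cardT nle by linarith
  have gsurj: "g ` \<Sigma> = E" using card_subset_eq[OF finE gE] cg cE by simp
  have so: "\<forall>f\<in>E. strictly_ordered n (edge_parts T E mark f)"
    using g gsurj \<Sigma>(3) by auto
  have sp3: "\<forall>v\<in>V. card (special T E mark v) = 3"
  proof (rule ccontr)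
    assume "\<not> ?thesis"
    then obtain v where "v\<in>V" "card (special T E mark v) \<noteq> 3" by blast
    hence "3 < card (special T E mark v)" using stab by force
    hence "\<exists>v\<in>V. 3 < card (special T E mark v)" using \<open>v\<in>V\<close> by blast
    hence "(\<Sum>v\<in>V. 3) < (\<Sum>v\<in>V. card (special T E mark v))"
      using stab fin by (intro sum_strict_mono_ex1) auto
    thus False using sumsp cardVE cardT cE by simp
  qed
  have part: "stable_2partition T (edge_parts T E mark f) \<and> (\<exists>B\<in>edge_parts T E mark f. cyclic_interval n B)" if fE: "f\<in>E" for f
    using so[rule_format, OF fE] unfolding strictly_ordered_def T_def .
  have T1': "(w,v) \<notin> R {v,w}" if vwE: "{v,w} \<in> E" for v w
  proof -
    obtain A where A: "A \<subseteq> T" "edge_parts T E mark {v,w} = {A, T - A}" "2 \<le> card A" "2 \<le> card (T - A)"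
      by (rule get_part[OF part[OF vwE, THEN conjunct1]])
    have "A \<noteq> {}" using A(3) by auto
    thus ?thesis using T1[OF A(2) A(1)] by (simp add: R_def)
  qed
  have ep: "edge_parts T E mark f = (\<lambda>x. Xs x f) ` f" for f
    by (simp add: edge_parts_def Xs_def R_def)
  have cover: "Xs a f \<union> Xs b f = T" if fE: "f\<in>E" and fab: "f = {a,b}" for f a b
  proof -
    obtain A where A: "A \<subseteq> T" "edge_parts T E mark f = {A, T - A}" "2 \<le> card A" "2 \<le> card (T - A)"
      by (rule get_part[OF part[OF fE, THEN conjunct1]])
    have "{Xs a f, Xs b f} = edge_parts T E mark f" unfolding ep fab by simp
    also note A(2)
    finally have "\<Union>{Xs a f, Xs b f} = \<Union>{A, T - A}" by (rule arg_cong)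
    thus ?thesis using A(1) by auto
  qed
  have XsT: "Xs x f \<subseteq> T" for x f by (auto simp: Xs_def)
  have ex2: "\<exists>f\<in>E. \<exists>x\<in>f. card (Xs x f \<inter> F) = 2"
  proof (rule ccontr)
    assume no2: "\<not> ?thesis"
    define P where "P fx = (fst fx \<in> E \<and> snd fx \<in> fst fx \<and> 3 \<le> card (Xs (snd fx) (fst fx) \<inter> F))" for fx
    define m where "m fx = card {x. (snd fx, x) \<in> R (fst fx)}" for fx
    have "\<exists>fx. P fx"
    proof -
      have "E \<noteq> {}" using cE assms(1) by auto
      then obtain f where f: "f \<in> E" by blast
      then obtain a b where ab: "f = {a,b}" using Eedge by blast
      have eqF: "(Xs a f \<inter> F) \<union> (Xs b f \<inter> F) = F" using cover[OF f ab] FT by auto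
      have "4 \<le> card (Xs a f \<inter> F) + card (Xs b f \<inter> F)"
        using card_Un_le[of "Xs a f \<inter> F" "Xs b f \<inter> F"] eqF cardF by simp
      moreover have "card (Xs a f \<inter> F) \<noteq> 2" "card (Xs b f \<inter> F) \<noteq> 2" using no2 f ab by auto
      ultimately have "3 \<le> card (Xs a f \<inter> F) \<or> 3 \<le> card (Xs b f \<inter> F)" by linarith
      thus ?thesis
      proof
        assume "3 \<le> card (Xs a f \<inter> F)"
        hence "P (f, a)" using f ab by (simp add: P_def)
        thus ?thesis by blast
      next
        assume "3 \<le> card (Xs b f \<inter> F)"
        hence "P (f, b)" using f ab by (simp add: P_def)
        thus ?thesis by blast
      qed
    qed
    then obtain fx where P: "P fx" and minm: "\<forall>gy. P gy \<longrightarrow> m fx \<le> m gy"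
      using ex_has_least_nat[of P _ m] by blast
    obtain e0 v where fx: "fx = (e0, v)" by (cases fx)
    with P have e0E: "e0\<in>E" "v\<in>e0" "3 \<le> card (Xs v e0 \<inter> F)" by (auto simp: P_def)
    obtain a b where ab: "a\<in>V" "b\<in>V" "a\<noteq>b" "e0={a,b}" using Eedge e0E(1) by blast
    obtain u where e0: "e0 = {u,v}" "u \<noteq> v" "u\<in>V" "v\<in>V"
    proof (cases "v = a")
      case True thus ?thesis using that[of b] ab by auto
    next
      case False
      hence "v = b" using ab e0E(2) by auto
      thus ?thesis using that[of a] ab by (auto simp: insert_commute)
    qed
    define N where "N = {w. {v,w} \<in> E \<and> w \<noteq> u}"
    have finS: "finite {x. (v,x) \<in> R e0}"
    proof -
      have "{x. (v,x) \<in> R e0} \<subseteq> V" using side_V[OF EsubV e0(4)] by (auto simp: R_def)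
      thus ?thesis using fin finite_subset by blast
    qed
    have small: "card (Xs w {v,w} \<inter> F) \<le> 1" if w: "w\<in>N" for w
    proof -
      have wE: "{v,w}\<in>E" "w\<noteq>u" using w by (auto simp: N_def)
      have ne: "{v,w} \<noteq> {u,v}" using wE(2) e0(2) by (auto simp: doubleton_eq_iff)
      have e0uv: "{u,v} \<in> E" using e0(1) e0E(1) by simp
      have nb: "(w,v) \<notin> (adj (E - {{v,w}}))\<^sup>*" using T1'[OF wE(1)] by (simp add: R_def)
      have incl: "{x. (w,x) \<in> R {v,w}} \<subseteq> {x. (v,x) \<in> R e0}"
      proof
        fix x assume "x \<in> {x. (w,x) \<in> R {v,w}}"
        hence "(w,x) \<in> (adj (E - {{v,w}}))\<^sup>*" by (simp add: R_def)
        hence "(v,x) \<in> (adj (E - {{u,v}}))\<^sup>*" by (rule side_incl[OF e0uv wE(1) ne nb])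
        thus "x \<in> {x. (v,x) \<in> R e0}" by (simp add: R_def e0(1))
      qed
      have vin: "v \<in> {x. (v,x) \<in> R e0}" by (simp add: R_def)
      have vnot: "v \<notin> {x. (w,x) \<in> R {v,w}}" using T1'[OF wE(1)] by auto
      have "card {x. (w,x) \<in> R {v,w}} < card {x. (v,x) \<in> R e0}"
        using incl vin vnot finS by (intro psubset_card_mono) auto
      hence "m ({v,w}, w) < m fx" by (simp add: m_def fx)
      hence "\<not> P ({v,w}, w)" using minm by force
      hence "card (Xs w {v,w} \<inter> F) < 3" using wE by (auto simp: P_def)
      moreover have "card (Xs w {v,w} \<inter> F) \<noteq> 2" using no2 wE by blast
      ultimately show ?thesis by simp
    qed
    have finN: "finite N" using finNb[of v] by (rule finite_subset[rotated]) (auto simp: N_def)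
    have sub: "Xs v e0 \<inter> F \<subseteq> {p\<in>T. mark p = v} \<union> (\<Union>w\<in>N. Xs w {v,w} \<inter> F)"
    proof
      fix p assume p: "p \<in> Xs v e0 \<inter> F"
      hence pT: "p\<in>T" and pr: "(v, mark p) \<in> (adj (E - {{u,v}}))\<^sup>*"
        by (auto simp: Xs_def R_def e0(1))
      from decomp[OF pr] show "p \<in> {p\<in>T. mark p = v} \<union> (\<Union>w\<in>N. Xs w {v,w} \<inter> F)"
        using pT p by (auto simp: N_def Xs_def R_def)
    qed
    have "card (Xs v e0 \<inter> F) \<le> card ({p\<in>T. mark p = v} \<union> (\<Union>w\<in>N. Xs w {v,w} \<inter> F))"
    proof (rule card_mono)
      have "{p\<in>T. mark p = v} \<union> (\<Union>w\<in>N. Xs w {v,w} \<inter> F) \<subseteq> T" using XsT by auto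
      thus "finite ({p\<in>T. mark p = v} \<union> (\<Union>w\<in>N. Xs w {v,w} \<inter> F))"
        using finT by (rule finite_subset)
    qed (rule sub)
    also have "\<dots> \<le> card {p\<in>T. mark p = v} + card (\<Union>w\<in>N. Xs w {v,w} \<inter> F)"
      by (rule card_Un_le)
    also have "card (\<Union>w\<in>N. Xs w {v,w} \<inter> F) \<le> (\<Sum>w\<in>N. card (Xs w {v,w} \<inter> F))"
      by (rule card_UN_le[OF finN])
    also have "\<dots> \<le> (\<Sum>w\<in>N. 1)" using small by (intro sum_mono) auto
    also have "\<dots> = card N" by simp
    finally have c: "card (Xs v e0 \<inter> F) \<le> card {p\<in>T. mark p = v} + card N" by simp
    have "{w. {v,w}\<in>E} = insert u N" using e0(1) e0E(1) by (auto simp: N_def insert_commute)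
    moreover have "u \<notin> N" by (simp add: N_def)
    ultimately have "card {w. {v,w}\<in>E} = card N + 1" using finN by simp
    hence "card {p\<in>T. mark p = v} + card N = 2" using spc[of v] sp3 e0(4) by simp
    thus False using c e0E(3) by simp
  qed
  then obtain f x where fx: "f\<in>E" "x\<in>f" "card (Xs x f \<inter> F) = 2" by blast
  obtain A where AB: "A \<subseteq> T" "edge_parts T E mark f = {A, T - A}" "2 \<le> card A" "2 \<le> card (T - A)"
    by (rule get_part[OF part[OF fx(1), THEN conjunct1]])
  obtain B where B: "B \<in> edge_parts T E mark f" "cyclic_interval n B"
    using part[OF fx(1), THEN conjunct2] by blast
  have mem: "Xs x f \<in> edge_parts T E mark f" using ep fx(2) by simp
  have c2: "card (Xs x f \<inter> {Zero, Sm i, One, Inf}) = 2" using fx(3) unfolding F_def .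
  have key: "\<exists>Y\<in>edge_parts (Spts n) E mark f. Y \<inter> {Zero, Sm i, One, Inf} = {Zero, Sm i} \<or> Y \<inter> {Zero, Sm i, One, Inf} = {Sm i, One}"
    by (rule comb[OF assms(1) AB(1)[unfolded T_def] AB(2)[unfolded T_def] B(1)[unfolded T_def] B(2) mem[unfolded T_def] c2])
  then obtain Y where Y: "Y \<in> edge_parts (Spts n) E mark f"
     "Y \<inter> {Zero, Sm i, One, Inf} = {Zero, Sm i} \<or> Y \<inter> {Zero, Sm i, One, Inf} = {Sm i, One}" by blast
  have sepA: "(\<exists>e\<in>E. \<exists>X\<in>edge_parts (Spts n) E mark e. X \<inter> {Zero, Sm i, One, Inf} = {Zero, Sm i})
     \<or> (\<exists>e\<in>E. \<exists>X\<in>edge_parts (Spts n) E mark e. X \<inter> {Zero, Sm i, One, Inf} = {Sm i, One})"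
    using Y(2)
  proof
    assume "Y \<inter> {Zero, Sm i, One, Inf} = {Zero, Sm i}"
    thus ?thesis using Y(1) fx(1) by blast
  next
    assume "Y \<inter> {Zero, Sm i, One, Inf} = {Sm i, One}"
    thus ?thesis using Y(1) fx(1) by blast
  qed
  show ?thesis
  proof (cases "\<exists>e\<in>E. \<exists>X\<in>edge_parts (Spts n) E mark e. X \<inter> {Zero, Sm i, One, Inf} = {Zero, Sm i}")
    case True
    thus ?thesis unfolding forget_value_def Let_def by simp
  next
    case False
    hence "\<exists>e\<in>E. \<exists>X\<in>edge_parts (Spts n) E mark e. X \<inter> {Zero, Sm i, One, Inf} = {Sm i, One}"
      using sepA by blast
    thus ?thesis using False unfolding forget_value_def Let_def by simp
  qed
qed

end
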